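(* Let $\mathcal{G}$ be a directed graph without self-loops with vertices $v_1,\dots,v_k$, and let $A_1,\dots,A_k$ be real $2\times 2$ matrices. Suppose there exist invertible matrices $P_1,\dots,P_k$ and Jordan matrices $J_1,\dots,J_k$ with $A_i=P_iJ_iP_i^{-1}$ a Jordan decomposition of $A_i$, such that for each $(r,s)\in\mathcal{E}(\mathcal{G})$ there exists $\eta_{(r,s)}>0$ with $\Vert P_s^{-1}P_re^{\eta_{(r,s)}J_r}\Vert<1$. Then for every loop $(i_1,\dots,i_p,i_1)$ in $\mathcal{G}$, the traces of $A_{i_1},\dots,A_{i_p}$ are not all non-negative, i.e. $\operatorname{trace}(A_{i_j})<0$ for at least one $j\in\{1,\dots,p\}$.
   Context: $\mathcal{E}(\mathcal{G})$ is the set of ordered pairs $(i,j)$ such that there is a directed edge from $v_i$ to $v_j$. A loop $(i_1,\dots,i_p,i_1)$ is a sequence of vertices $v_{i_1},\dots,v_{i_p},v_{i_1}$ with a directed edge from each vertex to the next. $\Vert\cdot\Vert$ denotes the spectral norm. *)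

theory Defs
  imports "HOL-Analysis.Analysis"
begin

fun mat_pow :: "'a::semiring_1^'n^'n \<Rightarrow> nat \<Rightarrow> 'a^'n^'n" where
  "mat_pow M 0 = mat 1"
| "mat_pow M (Suc n) = M ** mat_pow M n"

definition mat_exp :: "complex^'n^'n \<Rightarrow> complex^'n^'n" where
  "mat_exp M = (\<Sum>n. (1 / fact n) *\<^sub>R mat_pow M n)"

text \<open>Spectral norm: operator norm induced by the Euclidean (Hermitian) norm on C^n.\<close>
definition spectral_norm :: "complex^'n^'n \<Rightarrow> real" where
  "spectral_norm M = onorm (\<lambda>x. M *v x)"

definition jordan_matrix2 :: "complex^2^2 \<Rightarrow> bool" where
  "jordan_matrix2 J \<longleftrightarrow>
     (\<exists>a b. J = (\<chi> i j. if i = j then (if i = 1 then a else b) else 0)) \<or>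
     (\<exists>a. J = (\<chi> i j. if i = j then a else if i = 1 \<and> j = 2 then 1 else 0))"

definition cmat :: "real^'n^'m \<Rightarrow> complex^'n^'m" where
  "cmat A = (\<chi> i j. complex_of_real (A $ i $ j))"

text \<open>A loop (i_1,...,i_p,i_1) in the digraph with edge set E, given as the list [i_1,...,i_p].\<close>
definition is_loop :: "(nat \<times> nat) set \<Rightarrow> nat list \<Rightarrow> bool" where
  "is_loop E is \<longleftrightarrow> is \<noteq> [] \<and>
     (\<forall>j < length is. (is ! j, is ! ((j + 1) mod length is)) \<in> E)"

end

theory Submission
  imports Defs
begin

lemma norm_le_sum_vec: "norm (x::'a::real_normed_vector^'n) \<le> (\<Sum>i\<in>UNIV. norm (x$i))"
  unfolding norm_vec_def by (rule L2_set_le_sum) simp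

lemma mat_pow_entry_bound:
  fixes M :: "complex^2^2"
  assumes K: "\<And>i j. norm (M$i$j) \<le> K" "0 \<le> K"
  shows "norm (mat_pow M n $ i $ j) \<le> (2*K)^n"
proof (induction n arbitrary: i j)
  case 0
  show ?case by (simp add: mat_def)
next
  case (Suc n)
  have "mat_pow M (Suc n) $ i $ j = M$i$1 * mat_pow M n $1$j + M$i$2 * mat_pow M n $2$j"
    by (simp add: matrix_matrix_mult_def UNIV_2)
  also have "norm \<dots> \<le> norm (M$i$1 * mat_pow M n $1$j) + norm (M$i$2 * mat_pow M n $2$j)"
    by (rule norm_triangle_ineq)
  also have "\<dots> = norm (M$i$1) * norm (mat_pow M n $1$j) + norm (M$i$2) * norm (mat_pow M n $2$j)"
    by (simp only: norm_mult)
  also have "\<dots> \<le> K * (2*K)^n + K * (2*K)^n"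
    by (intro add_mono mult_mono Suc.IH K(1) K(2) norm_ge_zero)
  also have "\<dots> = (2*K)^Suc n" by simp
  finally show ?case .
qed

lemma mat_exp_summable:
  fixes M :: "complex^2^2"
  shows "summable (\<lambda>n. (1 / fact n) *\<^sub>R mat_pow M n)"
proof -
  define K where "K = norm M"
  have K1: "norm (M$i$j) \<le> K" for i j
    unfolding K_def by (rule order_trans[OF Finite_Cartesian_Product.norm_nth_le[of "M$i" j] Finite_Cartesian_Product.norm_nth_le[of M i]])
  have K2: "0 \<le> K" unfolding K_def by (rule norm_ge_zero)
  have b: "norm ((1 / fact n) *\<^sub>R mat_pow M n) \<le> 4 * (inverse (fact n) * (2*K)^n)" for n
  proof -
    have "norm (mat_pow M n) \<le> (\<Sum>i\<in>UNIV. norm (mat_pow M n $ i))" by (rule norm_le_sum_vec)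
    also have "\<dots> \<le> (\<Sum>i\<in>(UNIV::2 set). \<Sum>j\<in>(UNIV::2 set). norm (mat_pow M n $ i $ j))"
      by (intro sum_mono norm_le_sum_vec)
    also have "\<dots> \<le> (\<Sum>i\<in>(UNIV::2 set). \<Sum>j\<in>(UNIV::2 set). (2*K)^n)"
      by (intro sum_mono mat_pow_entry_bound K1 K2)
    also have "\<dots> = 4 * (2*K)^n" by (simp add: UNIV_2)
    finally have nb: "norm (mat_pow M n) \<le> 4 * (2*K)^n" .
    have "norm ((1 / fact n) *\<^sub>R mat_pow M n) = inverse (fact n) * norm (mat_pow M n)"
      by (simp add: divide_inverse)
    also have "\<dots> \<le> inverse (fact n) * (4 * (2*K)^n)"
      by (rule mult_left_mono[OF nb]) simp
    also have "\<dots> = 4 * (inverse (fact n) * (2*K)^n)" by (simp only: ac_simps)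
    finally show ?thesis .
  qed
  show ?thesis
    by (rule summable_comparison_test'[OF summable_mult[OF summable_exp] b])
qed

lemma mat_pow_triangular:
  fixes M :: "complex^2^2"
  assumes "M$2$1 = 0"
  shows "mat_pow M n $2$1 = 0 \<and> mat_pow M n $1$1 = (M$1$1)^n \<and> mat_pow M n $2$2 = (M$2$2)^n"
  by (induction n) (auto simp: mat_def matrix_matrix_mult_def UNIV_2 assms)

lemma det_mat_exp_triangular:
  fixes M :: "complex^2^2"
  assumes "M$2$1 = 0"
  shows "det (mat_exp M) = exp (M$1$1 + M$2$2)"
proof -
  let ?g = "\<lambda>n. (1 / fact n) *\<^sub>R mat_pow M n"
  note T = mat_pow_triangular[OF assms]
  have s: "?g sums mat_exp M" unfolding mat_exp_def by (rule summable_sums[OF mat_exp_summable])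
  have c: "(\<lambda>n. ?g n $ i $ j) sums (mat_exp M $ i $ j)" for i j
    using bounded_linear.sums[OF bounded_linear_vec_nth, OF bounded_linear.sums[OF bounded_linear_vec_nth, OF s]] .
  have g21: "(\<lambda>n. ?g n $ 2 $ 1) = (\<lambda>n. 0)" by (rule ext) (simp only: vector_scaleR_component T scaleR_zero_right)
  have e21: "mat_exp M $2$1 = 0" using sums_unique2[OF c[of 2 1, unfolded g21] sums_zero] .
  have g11: "(\<lambda>n. ?g n $ 1 $ 1) = (\<lambda>n. (M$1$1)^n /\<^sub>R fact n)"
    by (rule ext) (simp add: T divide_inverse)
  have g22: "(\<lambda>n. ?g n $ 2 $ 2) = (\<lambda>n. (M$2$2)^n /\<^sub>R fact n)"
    by (rule ext) (simp add: T divide_inverse)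
  have e11: "mat_exp M $1$1 = exp (M$1$1)"
    using sums_unique2[OF c[of 1 1], unfolded g11, OF exp_converges] .
  have e22: "mat_exp M $2$2 = exp (M$2$2)"
    using sums_unique2[OF c[of 2 2], unfolded g22, OF exp_converges] .
  show ?thesis by (simp only: det_2 e11 e22 e21 mult_zero_right diff_zero exp_add)
qed

lemma norm_axis_c2: "norm (axis (j::2) (1::complex)) = 1"
proof -
  have "j = 1 \<or> j = 2" using exhaust_2 by blast
  then show ?thesis unfolding norm_vec_def L2_set_def axis_def by (auto simp: UNIV_2)
qed

lemma det_le_spectral_norm:
  fixes M :: "complex^2^2"
  shows "cmod (det M) \<le> (spectral_norm M)^2"
proof -
  let ?o = "spectral_norm M"
  have onorm_nonneg: "0 \<le> ?o" unfolding spectral_norm_def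
    by (rule onorm_pos_le[OF matrix_vector_mul_bounded_linear])
  have col: "norm (M *v axis j 1) \<le> ?o" for j
    using onorm[OF matrix_vector_mul_bounded_linear, of M "axis j 1"]
    by (simp add: spectral_norm_def norm_axis_c2)
  have cj: "M *v axis j 1 = (\<chi> i. M$i$j)" for j
    by (simp add: matrix_vector_mult_def axis_def vec_eq_iff if_distrib cong: if_cong)
  have nrm: "norm (M *v axis j 1) = sqrt ((cmod (M$1$j))^2 + (cmod (M$2$j))^2)" for j
    unfolding cj norm_vec_def L2_set_def by (simp add: UNIV_2)
  define p where "p = cmod (M$1$1)"
  define q where "q = cmod (M$1$2)"
  define r where "r = cmod (M$2$1)"
  define s where "s = cmod (M$2$2)"
  have "cmod (det M) \<le> p * s + q * r"
  proof -
    have "cmod (M$1$1 * M$2$2 - M$1$2 * M$2$1) \<le> cmod (M$1$1 * M$2$2) + cmod (M$1$2 * M$2$1)"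
      by (rule norm_triangle_ineq4)
    then show ?thesis unfolding det_2 p_def q_def r_def s_def by (simp add: norm_mult)
  qed
  also have "\<dots> \<le> sqrt ((p^2 + r^2) * (q^2 + s^2))"
  proof (rule real_le_rsqrt)
    have "(p^2 + r^2) * (q^2 + s^2) - (p * s + q * r)^2 = (p * q - r * s)^2"
      by (simp add: power2_eq_square algebra_simps)
    moreover have "0 \<le> (p * q - r * s)^2" by simp
    ultimately show "(p * s + q * r)^2 \<le> (p^2 + r^2) * (q^2 + s^2)"
      by linarith
  qed
  also have "\<dots> = norm (M *v axis 1 1) * norm (M *v axis 2 1)"
    unfolding nrm p_def q_def r_def s_def by (simp add: real_sqrt_mult)
  also have "\<dots> \<le> ?o * ?o"
    by (rule mult_mono[OF col col onorm_nonneg norm_ge_zero])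
  finally show ?thesis by (simp only: power2_eq_square)
qed

lemma matrix_inv_props:
  fixes P :: "complex^2^2"
  assumes "invertible P"
  shows "P ** matrix_inv P = mat 1" "matrix_inv P ** P = mat 1"
proof -
  have "\<exists>A'. P ** A' = mat 1 \<and> A' ** P = mat 1" using assms unfolding invertible_def .
  then have "P ** (SOME A'. P ** A' = mat 1 \<and> A' ** P = mat 1) = mat 1 \<and> (SOME A'. P ** A' = mat 1 \<and> A' ** P = mat 1) ** P = mat 1"
    by (rule someI_ex)
  then show "P ** matrix_inv P = mat 1" "matrix_inv P ** P = mat 1" unfolding matrix_inv_def by blast+
qed

lemma det_inv_mul:
  fixes P :: "complex^2^2"
  assumes "invertible P"
  shows "det (matrix_inv P) * det P = 1"
proof -
  have "det (matrix_inv P) * det P = det (matrix_inv P ** P)" by (simp only: det_mul)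
  also have "\<dots> = 1" by (simp only: matrix_inv_props(2)[OF assms] det_I)
  finally show ?thesis .
qed

lemma jordan_props:
  assumes "jordan_matrix2 J"
  shows "J$2$1 = 0"
proof -
  have ne: "(2::2) \<noteq> 1" by simp
  show ?thesis using assms unfolding jordan_matrix2_def
    by (elim disjE exE) (simp_all only: vec_lambda_beta ne if_False simp_thms)
qed

lemma trace_conj:
  fixes P J :: "complex^2^2"
  assumes "invertible P"
  shows "trace (P ** J ** matrix_inv P) = trace J"
proof -
  have "trace (P ** J ** matrix_inv P) = trace (matrix_inv P ** (P ** J))"
    by (rule trace_mul_sym)
  also have "\<dots> = trace J"
    by (simp add: matrix_mul_assoc matrix_inv_props(2)[OF assms] matrix_mul_lid)
  finally show ?thesis .
qed

lemma trace_cmat: "trace (cmat (A::real^2^2)) = complex_of_real (trace A)"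
  by (simp add: trace_def cmat_def UNIV_2)

lemma trace2: "trace (J::complex^2^2) = J$1$1 + J$2$2"
  by (simp add: trace_def UNIV_2)

lemma edge_step:
  fixes A :: "real^2^2" and Pr Ps Jr :: "complex^2^2"
  assumes "invertible Pr" "invertible Ps" "jordan_matrix2 Jr"
    and "cmat A = Pr ** Jr ** matrix_inv Pr"
    and "\<eta> > 0" "spectral_norm (matrix_inv Ps ** Pr ** mat_exp (\<eta> *\<^sub>R Jr)) < 1"
    and "trace A \<ge> 0"
  shows "cmod (det Pr) < cmod (det Ps)"
proof -
  let ?M = "matrix_inv Ps ** Pr ** mat_exp (\<eta> *\<^sub>R Jr)"
  have trJ: "Jr$1$1 + Jr$2$2 = complex_of_real (trace A)"
    using trace_conj[OF assms(1), of Jr] assms(4) trace_cmat[of A] trace2[of Jr] by simp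
  have "(\<eta> *\<^sub>R Jr)$2$1 = 0" using jordan_props[OF assms(3)] by simp
  then have "det (mat_exp (\<eta> *\<^sub>R Jr)) = exp ((\<eta> *\<^sub>R Jr)$1$1 + (\<eta> *\<^sub>R Jr)$2$2)"
    by (rule det_mat_exp_triangular)
  also have "\<dots> = exp (\<eta> *\<^sub>R (Jr$1$1 + Jr$2$2))" by (simp add: scaleR_add_right)
  also have "\<dots> = exp (complex_of_real (\<eta> * trace A))" unfolding trJ by (simp add: scaleR_conv_of_real)
  finally have dE: "det (mat_exp (\<eta> *\<^sub>R Jr)) = exp (complex_of_real (\<eta> * trace A))" .
  have ge1: "1 \<le> cmod (det (mat_exp (\<eta> *\<^sub>R Jr)))"
    unfolding dE using assms(5,7) by simp
  have dPs: "det Ps \<noteq> 0" using assms(2) invertible_det_nz by blast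
  have "cmod (det ?M) \<le> (spectral_norm ?M)^2" by (rule det_le_spectral_norm)
  also have "\<dots> < 1"
  proof -
    have "0 \<le> spectral_norm ?M" unfolding spectral_norm_def
      by (rule onorm_pos_le[OF matrix_vector_mul_bounded_linear])
    then show ?thesis using assms(6) by (simp add: power_less_one_iff abs_square_less_1)
  qed
  finally have lt: "cmod (det ?M) < 1" .
  have "det ?M * det Ps = det Pr * det (mat_exp (\<eta> *\<^sub>R Jr))"
    using det_inv_mul[OF assms(2)] by (simp add: det_mul)
  then have "cmod (det ?M) * cmod (det Ps) = cmod (det Pr) * cmod (det (mat_exp (\<eta> *\<^sub>R Jr)))"
    by (metis norm_mult)
  moreover have "cmod (det ?M) * cmod (det Ps) < cmod (det Ps)"
    using lt dPs by simp
  moreover have "cmod (det Pr) \<le> cmod (det Pr) * cmod (det (mat_exp (\<eta> *\<^sub>R Jr)))"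
    using ge1 by (simp add: mult_le_cancel_left1)
  ultimately show ?thesis by linarith
qed

theorem proposition3p3:
  fixes k :: nat
    and E :: "(nat \<times> nat) set"
    and A :: "nat \<Rightarrow> real^2^2"
    and P J :: "nat \<Rightarrow> complex^2^2"
  assumes edges: "E \<subseteq> {..<k} \<times> {..<k}"
    and no_self_loops: "\<forall>i. (i, i) \<notin> E"
    and P_inv: "\<forall>i<k. invertible (P i)"
    and J_jordan: "\<forall>i<k. jordan_matrix2 (J i)"
    and decomp: "\<forall>i<k. cmat (A i) = P i ** J i ** matrix_inv (P i)"
    and contr: "\<forall>(r, s)\<in>E. \<exists>\<eta>>0.
                  spectral_norm (matrix_inv (P s) ** P r ** mat_exp (\<eta> *\<^sub>R J r)) < 1"
    and loop: "is_loop E is"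
  shows "\<exists>j<length is. trace (A (is ! j)) < 0"
proof (rule ccontr)
  assume "\<not> ?thesis"
  then have nn: "\<forall>j<length is. trace (A (is ! j)) \<ge> 0" by auto
  let ?p = "length is"
  define f where "f j = cmod (det (P (is ! j)))" for j
  have ne: "is \<noteq> []" and ed: "\<forall>j<?p. (is ! j, is ! ((j + 1) mod ?p)) \<in> E"
    using loop unfolding is_loop_def by auto
  have step: "f j < f ((j + 1) mod ?p)" if j: "j < ?p" for j
  proof -
    let ?r = "is ! j" and ?s = "is ! ((j + 1) mod ?p)"
    have e: "(?r, ?s) \<in> E" using ed j by blast
    then have rs: "?r < k" "?s < k" using edges by auto
    obtain \<eta> where "\<eta> > 0" "spectral_norm (matrix_inv (P ?s) ** P ?r ** mat_exp (\<eta> *\<^sub>R J ?r)) < 1"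
      using contr e by fastforce
    then show ?thesis unfolding f_def
      using edge_step[of "P ?r" "P ?s" "J ?r" "A ?r" \<eta>] rs P_inv J_jordan decomp nn j by blast
  qed
  have fin: "finite (f ` {..<?p})" "f ` {..<?p} \<noteq> {}" using ne by auto
  obtain j0 where j0: "j0 < ?p" "f j0 = Max (f ` {..<?p})"
    using Max_in[OF fin] by auto
  have "(j0 + 1) mod ?p < ?p" using ne by simp
  then have "f ((j0 + 1) mod ?p) \<le> f j0" using j0 fin by simp
  with step[OF j0(1)] show False by simp
qed

end
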